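(* Let $\mathcal{H}$ be a hypertree whose basic sets are $B_1,\dots,B_m$, and let $T$ be a tree with vertex set $V(\mathcal{H})$. Then $T$ is a host tree of $\mathcal{H}$ if and only if $E(T)=\bigcup_{i=1}^m E_i$, where $E_i$ is $B_i$-admissible for each $1\le i\le m$.
   Context: A hypergraph $\mathcal{H}$ has a finite vertex set $V(\mathcal{H})$ and a finite family of nonempty subsets (edges). A host tree is a tree on $V(\mathcal{H})$ in which every edge induces a connected subgraph; a hypertree is a hypergraph with a host tree. For $V'\subseteq V(\mathcal{H})$, $I_\mathcal{H}(V')$ is the intersection of all edges containing $V'$, or $V(\mathcal{H})$ if none does. For $A\subseteq V(\mathcal{H})$, $\overline{\mathcal{H}_A}$ is the hypergraph on $V(\mathcal{H})$ whose edges are the edges of $\mathcal{H}$ not containing $A$. The 2-section of a hypergraph is the graph on its vertices where two distinct vertices are adjacent iff some edge contains both. A union of sets is connected if the intersection graph of the sets is connected. $Comp(\mathcal{H})$ is the hypergraph without repeated edges on $V(\mathcal{H})$ whose edges are $V(\mathcal{H})$, all singletons, and all proper subsets obtainable from edges of $\mathcal{H}$ by repeated nonempty intersections and connected unions; a basic set is an edge of $Comp(\mathcal{H})$ with more than one vertex that is not a connected union of strictly smaller edges of $Comp(\mathcal{H})$. For a basic set $B$: $A(B)$ is the set of connected components of the 2-section of $\overline{\mathcal{H}_B}$ that contain at least one vertex of $B$; $\Delta(B)$ is the set of pairs $uv$ with $u,v\in B$ lying in different connected components of the 2-section of $\overline{\mathcal{H}_B}$. A collection $E\subseteq\Delta(B)$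 is $B$-admissible if the graph $\Gamma_{B,E}$ with vertex set $A(B)$, having for each $e\in E$ an edge between the components of $A(B)$ containing the two endpoints of $e$, is a tree. *)

theory Defs
  imports Main
begin

definition reach :: "'a set set \<Rightarrow> 'a \<Rightarrow> 'a \<Rightarrow> bool" where
  "reach E u v \<longleftrightarrow> (u, v) \<in> {(x, y). {x, y} \<in> E}\<^sup>*"

definition connected_on :: "'a set \<Rightarrow> 'a set set \<Rightarrow> bool" where
  "connected_on S E \<longleftrightarrow> S \<noteq> {} \<and>
     (\<forall>u\<in>S. \<forall>v\<in>S. reach {e \<in> E. e \<subseteq> S} u v)"

definition graph_edges_on :: "'a set \<Rightarrow> 'a set set" where
  "graph_edges_on V = {{u, v} | u v. u \<in> V \<and> v \<in> V \<and> u \<noteq> v}"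

definition is_tree :: "'a set \<Rightarrow> 'a set set \<Rightarrow> bool" where
  "is_tree V T \<longleftrightarrow> T \<subseteq> graph_edges_on V \<and> connected_on V T \<and>
     (\<forall>e\<in>T. \<not> connected_on V (T - {e}))"

definition component :: "'a set \<Rightarrow> 'a set set \<Rightarrow> 'a \<Rightarrow> 'a set" where
  "component V E v = {w \<in> V. reach {e \<in> E. e \<subseteq> V} v w}"

definition hypergraph :: "'a set \<Rightarrow> 'a set set \<Rightarrow> bool" where
  "hypergraph V H \<longleftrightarrow> finite V \<and> (\<forall>e\<in>H. e \<noteq> {} \<and> e \<subseteq> V)"

definition host_tree :: "'a set \<Rightarrow> 'a set set \<Rightarrow> 'a set set \<Rightarrow> bool" where
  "host_tree V H T \<longleftrightarrow> is_tree V T \<and> (\<forall>e\<in>H. connected_on e T)"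

definition hypertree :: "'a set \<Rightarrow> 'a set set \<Rightarrow> bool" where
  "hypertree V H \<longleftrightarrow> hypergraph V H \<and> (\<exists>T. host_tree V H T)"

definition connected_family :: "'a set set \<Rightarrow> bool" where
  "connected_family F \<longleftrightarrow> F \<noteq> {} \<and>
     (\<forall>A\<in>F. \<forall>B\<in>F. (A, B) \<in> {(X, Y). X \<in> F \<and> Y \<in> F \<and> X \<inter> Y \<noteq> {}}\<^sup>*)"

inductive_set gen_sets :: "'a set set \<Rightarrow> 'a set set" for H where
  edge: "e \<in> H \<Longrightarrow> e \<in> gen_sets H"
| inter: "A \<in> gen_sets H \<Longrightarrow> B \<in> gen_sets H \<Longrightarrow> A \<inter> B \<noteq> {} \<Longrightarrow> A \<inter> B \<in> gen_sets H"
| union: "(\<forall>A\<in>F. A \<in> gen_sets H) \<Longrightarrow> connected_family F \<Longrightarrow> \<Union>F \<in> gen_sets H"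

definition Comp :: "'a set \<Rightarrow> 'a set set \<Rightarrow> 'a set set" where
  "Comp V H = {V} \<union> {{v} | v. v \<in> V} \<union> {S \<in> gen_sets H. S \<subset> V}"

definition basic_set :: "'a set \<Rightarrow> 'a set set \<Rightarrow> 'a set \<Rightarrow> bool" where
  "basic_set V H B \<longleftrightarrow> B \<in> Comp V H \<and> card B > 1 \<and>
     \<not> (\<exists>F \<subseteq> {C \<in> Comp V H. C \<subset> B}. connected_family F \<and> \<Union>F = B)"

definition Hbar :: "'a set set \<Rightarrow> 'a set \<Rightarrow> 'a set set" where
  "Hbar H A = {e \<in> H. \<not> A \<subseteq> e}"

definition two_section :: "'a set \<Rightarrow> 'a set set \<Rightarrow> 'a set set" where
  "two_section V H = {{u, v} | u v. u \<in> V \<and> v \<in> V \<and> u \<noteq> v \<and> (\<exists>e\<in>H. u \<in> e \<and> v \<in> e)}"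

definition A_comps :: "'a set \<Rightarrow> 'a set set \<Rightarrow> 'a set \<Rightarrow> 'a set set" where
  "A_comps V H B = {component V (two_section V (Hbar H B)) v | v. v \<in> B}"

definition Delta :: "'a set \<Rightarrow> 'a set set \<Rightarrow> 'a set \<Rightarrow> 'a set set" where
  "Delta V H B = {{u, v} | u v. u \<in> B \<and> v \<in> B \<and>
      component V (two_section V (Hbar H B)) u \<noteq> component V (two_section V (Hbar H B)) v}"

definition Gamma_edge :: "'a set \<Rightarrow> 'a set set \<Rightarrow> 'a set \<Rightarrow> 'a set \<Rightarrow> 'a set set" where
  "Gamma_edge V H B e = (\<lambda>v. component V (two_section V (Hbar H B)) v) ` e"

text \<open>Gamma_{B,E} is a multigraph (one edge per element of E); it is a tree iff
  distinct elements of E give distinct edges (no parallel edges) and the resulting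
  simple graph is a tree.\<close>
definition admissible :: "'a set \<Rightarrow> 'a set set \<Rightarrow> 'a set \<Rightarrow> 'a set set \<Rightarrow> bool" where
  "admissible V H B E \<longleftrightarrow> E \<subseteq> Delta V H B \<and>
     inj_on (Gamma_edge V H B) E \<and> is_tree (A_comps V H B) (Gamma_edge V H B ` E)"

end

theory Submission
  imports Defs "HOL-Library.Transitive_Closure_Table"
begin

lemma reach_p: "reach E u v \<longleftrightarrow> (\<lambda>x y. {x,y} \<in> E)\<^sup>*\<^sup>* u v"
  unfolding reach_def by (simp add: rtranclp_rtrancl_eq)

lemma reach_refl[simp]: "reach E u u"
  by (simp add: reach_p)

lemma reach_edge: "{u,v} \<in> E \<Longrightarrow> reach E u v"
  unfolding reach_p by (rule r_into_rtranclp)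

lemma reach_trans: "reach E u v \<Longrightarrow> reach E v w \<Longrightarrow> reach E u w"
  unfolding reach_p by (meson rtranclp_trans)

lemma reach_step: "reach E u v \<Longrightarrow> {v,w} \<in> E \<Longrightarrow> reach E u w"
  using reach_trans reach_edge by metis

lemma reach_sym: "reach E u v \<Longrightarrow> reach E v u"
  unfolding reach_p
proof (induction rule: rtranclp_induct)
  case base then show ?case by simp
next
  case (step y z)
  then have "{z,y} \<in> E" by (simp add: insert_commute)
  then show ?case using step(3) by (meson converse_rtranclp_into_rtranclp)
qed

lemma reach_mono: "E \<subseteq> E' \<Longrightarrow> reach E u v \<Longrightarrow> reach E' u v"
  unfolding reach_p by (metis (no_types, lifting) mono_rtranclp subsetD)

lemma reach_induct[consumes 1, case_names base step]:
  assumes "reach E a b" "P a" "\<And>y z. reach E a y \<Longrightarrow> {y,z} \<in> E \<Longrightarrow> P y \<Longrightarrow> P z"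
  shows "P b"
  using assms(1) unfolding reach_p
proof (induction rule: rtranclp_induct)
  case base then show ?case using assms(2) by simp
next
  case (step y z) then show ?case using assms(3) reach_p by metis
qed

lemma conn_single: "connected_on {v} E"
  unfolding connected_on_def by simp

lemma clique_union:
  assumes "connected_family F" "\<forall>A\<in>F. \<forall>u\<in>A. \<forall>v\<in>A. R u v"
    and "\<And>x y z. R x y \<Longrightarrow> R y z \<Longrightarrow> R x z"
  shows "\<forall>u\<in>\<Union>F. \<forall>v\<in>\<Union>F. R u v"
proof (intro ballI)
  fix u v assume "u \<in> \<Union>F" "v \<in> \<Union>F"
  then obtain A B where AB: "A \<in> F" "B \<in> F" "u \<in> A" "v \<in> B" by auto
  have "(A, B) \<in> {(X, Y). X \<in> F \<and> Y \<in> F \<and> X \<inter> Y \<noteq> {}}\<^sup>*"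
    using assms(1) AB unfolding connected_family_def by blast
  then have "\<forall>w\<in>B. R u w"
  proof (induction rule: rtrancl_induct)
    case base then show ?case using assms(2) AB by blast
  next
    case (step Y Z)
    then obtain w where "w \<in> Y" "w \<in> Z" "Z \<in> F" by auto
    then show ?case using step assms(2,3) by metis
  qed
  then show "R u v" using AB by blast
qed

lemma conn_union:
  assumes "connected_family F" "\<forall>A\<in>F. connected_on A E"
  shows "connected_on (\<Union>F) E"
proof -
  have "\<forall>A\<in>F. \<forall>u\<in>A. \<forall>v\<in>A. reach {e \<in> E. e \<subseteq> \<Union>F} u v"
  proof (intro ballI)
    fix A u v assume "A \<in> F" "u \<in> A" "v \<in> A"
    then have "reach {e \<in> E. e \<subseteq> A} u v" using assms(2) unfolding connected_on_def by blast
    then show "reach {e \<in> E. e \<subseteq> \<Union>F} u v"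
      by (rule reach_mono[rotated]) (use \<open>A \<in> F\<close> in auto)
  qed
  then have "\<forall>u\<in>\<Union>F. \<forall>v\<in>\<Union>F. reach {e \<in> E. e \<subseteq> \<Union>F} u v"
    by (rule clique_union[OF assms(1)]) (rule reach_trans)
  moreover have "\<Union>F \<noteq> {}"
  proof -
    obtain A where "A \<in> F" using assms(1) unfolding connected_family_def by blast
    moreover then have "A \<noteq> {}" using assms(2) unfolding connected_on_def by blast
    ultimately show ?thesis by blast
  qed
  ultimately show ?thesis unfolding connected_on_def by blast
qed

lemma conn_remove:
  assumes "connected_on S E" "\<not> e \<subseteq> S"
  shows "connected_on S (E - {e})"
proof -
  have "{f \<in> E - {e}. f \<subseteq> S} = {f \<in> E. f \<subseteq> S}" using assms(2) by auto
  then show ?thesis using assms(1) unfolding connected_on_def by simp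
qed

lemma tree_edges_sub: "is_tree V T \<Longrightarrow> e \<in> T \<Longrightarrow> e \<subseteq> V"
  unfolding is_tree_def graph_edges_on_def by auto

lemma tree_filter: "is_tree V T \<Longrightarrow> {e \<in> T. e \<subseteq> V} = T"
  using tree_edges_sub by blast

lemma tree_reach: assumes "is_tree V T" "u \<in> V" "v \<in> V" shows "reach T u v"
proof -
  have "connected_on V T" using assms(1) unfolding is_tree_def by blast
  then have "reach {e \<in> T. e \<subseteq> V} u v" using assms(2,3) unfolding connected_on_def by blast
  then show ?thesis using tree_filter[OF assms(1)] by simp
qed

lemma tree_cut:
  assumes "is_tree V T" "{a,b} \<in> T"
  shows "\<not> reach (T - {{a,b}}) a b"
proof
  assume ab: "reach (T - {{a,b}}) a b"
  have sub: "{e \<in> T - {{a,b}}. e \<subseteq> V} = T - {{a,b}}" using tree_filter[OF assms(1)] by auto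
  have "reach (T - {{a,b}}) u v" if "u \<in> V" "v \<in> V" for u v
  proof -
    have "reach T u v" using tree_reach[OF assms(1) that] .
    then show ?thesis
    proof (induction rule: reach_induct)
      case base then show ?case by simp
    next
      case (step y z)
      show ?case
      proof (cases "{y,z} = {a,b}")
        case True
        then have "(y = a \<and> z = b) \<or> (y = b \<and> z = a)" by (simp add: doubleton_eq_iff)
        then have "reach (T - {{a,b}}) y z"
        proof
          assume "y = a \<and> z = b" then show ?thesis using ab by simp
        next
          assume "y = b \<and> z = a" then show ?thesis using reach_sym[OF ab] by simp
        qed
        then show ?thesis by (rule reach_trans[OF step(3)])
      next
        case False
        then have "{y,z} \<in> T - {{a,b}}" using step(2) by simp
        then show ?thesis by (rule reach_step[OF step(3)])
      qed
    qed
  qed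
  then have "connected_on V (T - {{a,b}})"
    using sub assms(1) unfolding connected_on_def is_tree_def by auto
  then show False using assms unfolding is_tree_def by blast
qed

lemma path_avoid:
  assumes "rtrancl_path (\<lambda>x y. {x,y} \<in> T) x ys z" "a \<notin> set (x # ys)" "a \<in> e"
  shows "reach (T - {e}) x z"
  using assms
proof (induction rule: rtrancl_path.induct)
  case (base x) then show ?case by simp
next
  case (step x y ys z)
  then have xy: "{x,y} \<in> T - {e}" by auto
  have "reach (T - {e}) y z" using step.IH step.prems by simp
  then show ?case using xy reach_edge reach_trans by metis
qed

lemma path_in:
  assumes "is_tree V T"
    and side: "\<forall>e\<in>T. \<not> e \<subseteq> S \<longrightarrow> (\<forall>a\<in>S. \<forall>b\<in>S. reach (T - {e}) a b)"
    and "rtrancl_path (\<lambda>x y. {x,y} \<in> T) a xs v" "distinct (a # xs)" "a \<in> S" "v \<in> S"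
  shows "reach {e \<in> T. e \<subseteq> S} a v"
  using assms(3-)
proof (induction rule: rtrancl_path.induct)
  case (base x) then show ?case by simp
next
  case (step a b ys v)
  show ?case
  proof (cases "b \<in> S")
    case True
    have "distinct (b # ys)" using step.prems(1) by simp
    then have bv: "reach {e \<in> T. e \<subseteq> S} b v" using step.IH True step.prems(3) by simp
    have "{a,b} \<in> {e \<in> T. e \<subseteq> S}" using step.hyps(1) step.prems(2) True by simp
    then show ?thesis using reach_trans[OF reach_edge bv] by simp
  next
    case False
    then have ns: "\<not> {a,b} \<subseteq> S" by simp
    have bv: "reach (T - {{a,b}}) b v"
      using path_avoid[OF step.hyps(2), of a "{a,b}"] step.prems(1) by simp
    have va: "reach (T - {{a,b}}) v a" using side step.hyps(1) step.prems(2,3) ns by blast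
    have "reach (T - {{a,b}}) a b" using reach_sym[OF reach_trans[OF bv va]] .
    then show ?thesis using tree_cut[OF assms(1) step.hyps(1)] by blast
  qed
qed

lemma conn_by_side:
  assumes "is_tree V T" "S \<subseteq> V" "S \<noteq> {}"
    and side: "\<forall>e\<in>T. \<not> e \<subseteq> S \<longrightarrow> (\<forall>a\<in>S. \<forall>b\<in>S. reach (T - {e}) a b)"
  shows "connected_on S T"
  unfolding connected_on_def
proof (intro conjI ballI)
  show "S \<noteq> {}" by fact
  fix u v assume uv: "u \<in> S" "v \<in> S"
  then have "reach T u v" using tree_reach[OF assms(1)] assms(2) by (meson subsetD)
  then have "\<exists>xs. rtrancl_path (\<lambda>x y. {x,y} \<in> T) u xs v"
    unfolding reach_p by (simp add: rtranclp_eq_rtrancl_path)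
  then obtain xs where "rtrancl_path (\<lambda>x y. {x,y} \<in> T) u xs v" ..
  then obtain xs' where p: "rtrancl_path (\<lambda>x y. {x,y} \<in> T) u xs' v" and d: "distinct (u # xs')"
    by (rule rtrancl_path_distinct)
  show "reach {e \<in> T. e \<subseteq> S} u v" by (rule path_in[OF assms(1) side p d uv])
qed

lemma tree_inter:
  assumes "is_tree V T" "A \<subseteq> V" "B \<subseteq> V" "connected_on A T" "connected_on B T" "A \<inter> B \<noteq> {}"
  shows "connected_on (A \<inter> B) T"
proof (rule conn_by_side[OF assms(1)])
  show "A \<inter> B \<subseteq> V" using assms by auto
  show "A \<inter> B \<noteq> {}" by fact
  show "\<forall>e\<in>T. \<not> e \<subseteq> A \<inter> B \<longrightarrow> (\<forall>a\<in>A \<inter> B. \<forall>b\<in>A \<inter> B. reach (T - {e}) a b)"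
  proof (intro ballI impI)
    fix e a b assume e: "e \<in> T" "\<not> e \<subseteq> A \<inter> B" and ab: "a \<in> A \<inter> B" "b \<in> A \<inter> B"
    show "reach (T - {e}) a b"
    proof (cases "e \<subseteq> A")
      case True
      then have "\<not> e \<subseteq> B" using e by auto
      then have "connected_on B (T - {e})" using conn_remove assms(5) by blast
      then have "reach {f \<in> T - {e}. f \<subseteq> B} a b" using ab unfolding connected_on_def by blast
      then show ?thesis by (rule reach_mono[rotated]) auto
    next
      case False
      then have "connected_on A (T - {e})" using conn_remove assms(4) by blast
      then have "reach {f \<in> T - {e}. f \<subseteq> A} a b" using ab unfolding connected_on_def by blast
      then show ?thesis by (rule reach_mono[rotated]) auto
    qed
  qed
qed

lemma tree_side:
  assumes "is_tree V T" "{x,y} \<in> T" "connected_family F" "\<forall>A\<in>F. connected_on A T"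
    "x \<in> \<Union>F" "y \<in> \<Union>F"
  shows "\<exists>A\<in>F. x \<in> A \<and> y \<in> A"
proof (rule ccontr)
  assume na: "\<not> ?thesis"
  have "\<forall>A\<in>F. connected_on A (T - {{x,y}})"
  proof
    fix A assume "A \<in> F"
    then have "\<not> {x,y} \<subseteq> A" "connected_on A T" using na assms(4) by auto
    then show "connected_on A (T - {{x,y}})" using conn_remove by blast
  qed
  then have "connected_on (\<Union>F) (T - {{x,y}})" by (rule conn_union[OF assms(3)])
  then have "reach {e \<in> T - {{x,y}}. e \<subseteq> \<Union>F} x y" using assms(5,6) unfolding connected_on_def by blast
  then have "reach (T - {{x,y}}) x y" by (rule reach_mono[rotated]) auto
  then show False using tree_cut[OF assms(1,2)] by blast
qed



lemma gen_sub:
  assumes hg: "\<forall>e\<in>H. e \<noteq> {} \<and> e \<subseteq> V" and "S \<in> gen_sets H"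
  shows "S \<subseteq> V \<and> S \<noteq> {}"
  using assms(2)
proof induction
  case (edge e) then show ?case using hg by blast
next
  case (inter A B) then show ?case by blast
next
  case (union F)
  then obtain A where "A \<in> F" unfolding connected_family_def by blast
  then show ?case using union by blast
qed

lemma gen_conn:
  assumes tr: "is_tree V T" and hg: "\<forall>e\<in>H. e \<noteq> {} \<and> e \<subseteq> V"
    and ec: "\<forall>e\<in>H. connected_on e T" and "S \<in> gen_sets H"
  shows "connected_on S T"
  using assms(4)
proof induction
  case (edge e) then show ?case using ec by blast
next
  case (inter A B)
  have "A \<subseteq> V" "B \<subseteq> V" using gen_sub[OF hg] inter.hyps by blast+
  then show ?case using tree_inter[OF tr] inter by blast
next
  case (union F)
  then show ?case using conn_union by blast
qed

lemma Comp_cases: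
  "C \<in> Comp V H \<Longrightarrow> C = V \<or> (\<exists>v\<in>V. C = {v}) \<or> (C \<in> gen_sets H \<and> C \<subset> V)"
  unfolding Comp_def by blast

lemma Comp_sub:
  assumes hg: "\<forall>e\<in>H. e \<noteq> {} \<and> e \<subseteq> V" and "V \<noteq> {}" and "C \<in> Comp V H"
  shows "C \<subseteq> V \<and> C \<noteq> {}"
  using Comp_cases[OF assms(3)] gen_sub[OF hg] assms(2) by blast

lemma gen_Comp:
  assumes hg: "\<forall>e\<in>H. e \<noteq> {} \<and> e \<subseteq> V" and "S \<in> gen_sets H" "S \<noteq> V"
  shows "S \<in> Comp V H"
  using gen_sub[OF hg assms(2)] assms(2,3) unfolding Comp_def by blast

lemma edge_Comp:
  assumes hg: "\<forall>e\<in>H. e \<noteq> {} \<and> e \<subseteq> V" and "e \<in> H"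
  shows "e \<in> Comp V H"
proof (cases "e = V")
  case True then show ?thesis unfolding Comp_def by blast
next
  case False then show ?thesis using gen_Comp[OF hg gen_sets.edge[OF assms(2)]] by blast
qed

lemma Comp_inter:
  assumes hg: "\<forall>e\<in>H. e \<noteq> {} \<and> e \<subseteq> V" and "C1 \<in> Comp V H" "C2 \<in> Comp V H" "C1 \<inter> C2 \<noteq> {}"
  shows "C1 \<inter> C2 \<in> Comp V H"
proof -
  have s1: "C1 \<subseteq> V" "C2 \<subseteq> V"
    using Comp_cases[OF assms(2)] Comp_cases[OF assms(3)] by blast+
  consider "C1 = V" | "\<exists>v\<in>V. C1 = {v}" | "C1 \<in> gen_sets H \<and> C1 \<subset> V"
    using Comp_cases[OF assms(2)] by blast
  then show ?thesis
  proof cases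
    case 1 then show ?thesis using s1 assms(3) by (simp add: Int_absorb1)
  next
    case 2 then obtain v where "v \<in> V" "C1 = {v}" by blast
    then have "C1 \<inter> C2 = {v}" using assms(4) by blast
    then show ?thesis using \<open>v \<in> V\<close> unfolding Comp_def by blast
  next
    case 3
    consider "C2 = V" | "\<exists>v\<in>V. C2 = {v}" | "C2 \<in> gen_sets H \<and> C2 \<subset> V"
      using Comp_cases[OF assms(3)] by blast
    then show ?thesis
    proof cases
      case 1 then show ?thesis using s1 assms(2) by (simp add: Int_absorb2)
    next
      case 2 then obtain v where "v \<in> V" "C2 = {v}" by blast
      then have "C1 \<inter> C2 = {v}" using assms(4) by blast
      then show ?thesis using \<open>v \<in> V\<close> unfolding Comp_def by blast
    next
      case 4: 3
      have "C1 \<inter> C2 \<in> gen_sets H" using 3 4 assms(4) gen_sets.inter by blast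
      moreover have "C1 \<inter> C2 \<subset> V" using 3 by blast
      ultimately show ?thesis unfolding Comp_def by blast
    qed
  qed
qed

lemma Comp_conn:
  assumes tr: "is_tree V T" and hg: "\<forall>e\<in>H. e \<noteq> {} \<and> e \<subseteq> V"
    and ec: "\<forall>e\<in>H. connected_on e T" and "C \<in> Comp V H"
  shows "connected_on C T"
proof -
  consider "C = V" | "\<exists>v\<in>V. C = {v}" | "C \<in> gen_sets H \<and> C \<subset> V"
    using Comp_cases[OF assms(4)] by blast
  then show ?thesis
  proof cases
    case 1 then show ?thesis using tr unfolding is_tree_def by blast
  next
    case 2 then obtain v where "C = {v}" by blast
    then show ?thesis using conn_single by simp
  next
    case 3 then show ?thesis using gen_conn[OF tr hg ec] by blast
  qed
qed

section \<open>Two-sections and components\<close>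

lemma ts_edge:
  assumes "{u,v} \<in> two_section V K"
  shows "u \<in> V \<and> v \<in> V \<and> u \<noteq> v \<and> (\<exists>e\<in>K. u \<in> e \<and> v \<in> e)"
proof -
  obtain a b where ab: "{u,v} = {a,b}" "a \<in> V" "b \<in> V" "a \<noteq> b" "\<exists>e\<in>K. a \<in> e \<and> b \<in> e"
    using assms unfolding two_section_def by blast
  then have "(u = a \<and> v = b) \<or> (u = b \<and> v = a)" by (simp add: doubleton_eq_iff)
  then show ?thesis using ab by blast
qed

lemma ts_intro:
  assumes "u \<in> V" "v \<in> V" "u \<noteq> v" "e \<in> K" "u \<in> e" "v \<in> e"
  shows "{u,v} \<in> two_section V K"
  using assms unfolding two_section_def by blast

lemma ts_filter: "{e \<in> two_section V K. e \<subseteq> V} = two_section V K"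
  unfolding two_section_def by blast

lemma comp_simp: "component V (two_section V K) v = {w \<in> V. reach (two_section V K) v w}"
  unfolding component_def ts_filter ..

lemma edge_reach:
  assumes "e \<in> K" "e \<subseteq> V" "a \<in> e" "b \<in> e"
  shows "reach (two_section V K) a b"
proof (cases "a = b")
  case True then show ?thesis by simp
next
  case False
  have "a \<in> V" "b \<in> V" using assms(2,3,4) by auto
  then have "{a,b} \<in> two_section V K" using ts_intro[OF _ _ False assms(1,3,4)] by simp
  then show ?thesis by (rule reach_edge)
qed

lemma comp_self: "u \<in> V \<Longrightarrow> u \<in> component V (two_section V K) u"
  unfolding comp_simp by simp

lemma comp_eq_iff:
  assumes "u \<in> V" "w \<in> V"
  shows "component V (two_section V K) u = component V (two_section V K) w \<longleftrightarrow> reach (two_section V K) u w"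
proof
  assume "component V (two_section V K) u = component V (two_section V K) w"
  then have "w \<in> component V (two_section V K) u" using comp_self[OF assms(2)] by simp
  then show "reach (two_section V K) u w" unfolding comp_simp by simp
next
  assume r: "reach (two_section V K) u w"
  have 1: "reach (two_section V K) u x" if "reach (two_section V K) w x" for x
    using reach_trans[OF r that] .
  have 2: "reach (two_section V K) w x" if "reach (two_section V K) u x" for x
    using reach_trans[OF reach_sym[OF r] that] .
  show "component V (two_section V K) u = component V (two_section V K) w"
    unfolding comp_simp using 1 2 by blast
qed

lemma reach_last:
  assumes "reach E u v" "u \<noteq> v"
  shows "\<exists>y. reach E u y \<and> {y,v} \<in> E"
proof -
  have "v = u \<or> (\<exists>y. reach E u y \<and> {y,v} \<in> E)"
    using assms(1)
  proof (induction rule: reach_induct)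
    case base then show ?case by simp
  next
    case (step y z) then show ?case by blast
  qed
  then show ?thesis using assms(2) by blast
qed

lemma edge_in_comp:
  assumes "e \<in> K" "e \<subseteq> V" "w \<in> e" "w \<in> component V (two_section V K) u"
  shows "e \<subseteq> component V (two_section V K) u"
proof
  fix x assume "x \<in> e"
  then have a: "reach (two_section V K) w x" using edge_reach[OF assms(1,2,3)] by blast
  have b: "reach (two_section V K) u w" using assms(4) unfolding comp_simp by simp
  have "x \<in> V" using \<open>x \<in> e\<close> assms(2) by blast
  then show "x \<in> component V (two_section V K) u"
    unfolding comp_simp using reach_trans[OF b a] by blast
qed

lemma comp_conn:
  assumes tr: "is_tree V T" and hg: "\<forall>e\<in>K. e \<subseteq> V"
    and ec: "\<forall>e\<in>K. connected_on e T" and u: "u \<in> V"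
  shows "connected_on (component V (two_section V K) u) T"
proof -
  let ?G = "two_section V K"
  let ?C = "component V ?G u"
  have r: "reach {e \<in> T. e \<subseteq> ?C} u w" if "w \<in> ?C" for w
  proof -
    have "reach ?G u w" using that unfolding comp_simp by simp
    then show ?thesis
    proof (induction rule: reach_induct)
      case base then show ?case by simp
    next
      case (step y z)
      obtain e where e: "e \<in> K" "y \<in> e" "z \<in> e" "y \<in> V" using ts_edge[OF step(2)] by blast
      have "y \<in> ?C" using step(1) e(4) unfolding comp_simp by simp
      then have sub: "e \<subseteq> ?C" using edge_in_comp[OF e(1) _ e(2)] hg e(1) by blast
      have "reach {f \<in> T. f \<subseteq> e} y z" using ec e unfolding connected_on_def by blast
      then have "reach {f \<in> T. f \<subseteq> ?C} y z" by (rule reach_mono[rotated]) (use sub in blast)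
      then show ?case by (rule reach_trans[OF step(3)])
    qed
  qed
  show ?thesis unfolding connected_on_def
  proof (intro conjI ballI)
    show "?C \<noteq> {}" using comp_self[OF u] by blast
    fix a b assume "a \<in> ?C" "b \<in> ?C"
    then show "reach {e \<in> T. e \<subseteq> ?C} a b" using reach_trans[OF reach_sym[OF r] r] by blast
  qed
qed

lemma gen_one_comp:
  assumes hg: "\<forall>e\<in>H. e \<noteq> {} \<and> e \<subseteq> V" and "S \<in> gen_sets H"
  shows "\<not> B \<subseteq> S \<longrightarrow> (\<forall>u\<in>S. \<forall>v\<in>S. reach (two_section V (Hbar H B)) u v)"
  using assms(2)
proof induction
  case (edge e)
  show ?case
  proof (intro impI ballI)
    fix u v assume nb: "\<not> B \<subseteq> e" and uv: "u \<in> e" "v \<in> e"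
    have eh: "e \<in> Hbar H B" using edge nb unfolding Hbar_def by blast
    have ev: "e \<subseteq> V" using hg edge by blast
    show "reach (two_section V (Hbar H B)) u v" by (rule edge_reach[OF eh ev uv])
  qed
next
  case (inter A C)
  show ?case
  proof (intro impI ballI)
    fix u v assume nb: "\<not> B \<subseteq> A \<inter> C" and uv: "u \<in> A \<inter> C" "v \<in> A \<inter> C"
    then consider "\<not> B \<subseteq> A" | "\<not> B \<subseteq> C" by blast
    then show "reach (two_section V (Hbar H B)) u v"
    proof cases
      case 1 then show ?thesis using inter.IH(1) uv by blast
    next
      case 2 then show ?thesis using inter.IH(2) uv by blast
    qed
  qed
next
  case (union F)
  show ?case
  proof
    assume nb: "\<not> B \<subseteq> \<Union>F"
    have "\<forall>A\<in>F. \<forall>u\<in>A. \<forall>v\<in>A. reach (two_section V (Hbar H B)) u v"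
    proof
      fix A assume "A \<in> F"
      then have "\<not> B \<subseteq> A" using nb by blast
      then show "\<forall>u\<in>A. \<forall>v\<in>A. reach (two_section V (Hbar H B)) u v" using union.IH \<open>A \<in> F\<close> by blast
    qed
    then show "\<forall>u\<in>\<Union>F. \<forall>v\<in>\<Union>F. reach (two_section V (Hbar H B)) u v"
      by (rule clique_union[OF union.hyps]) (rule reach_trans)
  qed
qed

lemma path_side:
  assumes tr: "is_tree V T" and ec: "\<forall>e\<in>K. connected_on e T" and xy: "{x,y} \<in> T"
    and r: "reach (two_section V K) x y"
  shows "\<exists>e\<in>K. x \<in> e \<and> y \<in> e"
proof -
  have gen: "reach (T - {{x,y}}) x z \<or> (\<exists>e\<in>K. x \<in> e \<and> y \<in> e)"
    if "reach (two_section V K) x z" for z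
    using that
  proof (induction rule: reach_induct)
    case base then show ?case by simp
  next
    case (step w z)
    obtain e where e: "e \<in> K" "w \<in> e" "z \<in> e" using ts_edge[OF step(2)] by blast
    show ?case
    proof (cases "x \<in> e \<and> y \<in> e")
      case True then show ?thesis using e by blast
    next
      case False
      then have "\<not> {x,y} \<subseteq> e" by simp
      moreover have "connected_on e T" using ec e(1) by blast
      ultimately have "connected_on e (T - {{x,y}})" using conn_remove by blast
      then have "reach {f \<in> T - {{x,y}}. f \<subseteq> e} w z" using e(2,3) unfolding connected_on_def by blast
      then have wz: "reach (T - {{x,y}}) w z" by (rule reach_mono[rotated]) (rule Collect_subset)
      show ?thesis
      proof (cases "reach (T - {{x,y}}) x w")
        case True then show ?thesis using reach_trans[OF True wz] by blast
      next
        case False then show ?thesis using step(3) by blast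
      qed
    qed
  qed
  have "reach (T - {{x,y}}) x y \<or> (\<exists>e\<in>K. x \<in> e \<and> y \<in> e)" by (rule gen[OF r])
  moreover have "\<not> reach (T - {{x,y}}) x y" by (rule tree_cut[OF tr xy])
  ultimately show ?thesis by blast
qed



lemma Gamma_pair: "Gamma_edge V H B {u,v} = {component V (two_section V (Hbar H B)) u, component V (two_section V (Hbar H B)) v}"
  unfolding Gamma_edge_def by simp

lemma Delta_elem:
  assumes "e \<in> Delta V H B"
  obtains u v where "e = {u,v}" "u \<in> B" "v \<in> B"
    "component V (two_section V (Hbar H B)) u \<noteq> component V (two_section V (Hbar H B)) v"
  using assms unfolding Delta_def by blast

lemma basic_min:
  assumes tr: "is_tree V T" and hg: "\<forall>e\<in>H. e \<noteq> {} \<and> e \<subseteq> V" and fin: "finite V"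
    and ec: "\<forall>e\<in>H. connected_on e T" and xy: "{x,y} \<in> T"
  shows "\<exists>B. basic_set V H B \<and> {x,y} \<in> Delta V H B"
proof -
  have xyV: "x \<in> V" "y \<in> V" using tree_edges_sub[OF tr xy] by auto
  have "x \<noteq> y"
  proof
    assume "x = y"
    then have "{x} \<in> graph_edges_on V" using xy tr unfolding is_tree_def by auto
    then show False unfolding graph_edges_on_def by (auto simp: doubleton_eq_iff)
  qed
  let ?P = "\<lambda>C. C \<in> Comp V H \<and> x \<in> C \<and> y \<in> C"
  have PV: "?P V" using xyV unfolding Comp_def by blast
  obtain B where PB: "?P B" and minB: "\<And>C. ?P C \<Longrightarrow> card B \<le> card C"
    using ex_has_least_nat[of ?P V card] PV by blast
  have BV: "B \<subseteq> V" using Comp_cases[of B V H] PB by blast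
  have finB: "finite B" using finite_subset[OF BV fin] .
  have nosmall: False if "?P C" "C \<subset> B" for C
    using minB[OF that(1)] psubset_card_mono[OF finB that(2)] by simp
  have cardB: "card B > 1"
  proof -
    have "card {x,y} \<le> card B" using PB finB by (intro card_mono) auto
    then show ?thesis using \<open>x \<noteq> y\<close> by simp
  qed
  have basic: "basic_set V H B"
    unfolding basic_set_def
  proof (intro conjI notI)
    show "B \<in> Comp V H" using PB by blast
    show "card B > 1" by fact
    assume "\<exists>F\<subseteq>{C \<in> Comp V H. C \<subset> B}. connected_family F \<and> \<Union>F = B"
    then obtain F where F: "F \<subseteq> {C \<in> Comp V H. C \<subset> B}" "connected_family F" "\<Union>F = B" by blast
    have "\<forall>A\<in>F. connected_on A T" using F(1) Comp_conn[OF tr hg ec] by blast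
    moreover have "x \<in> \<Union>F" "y \<in> \<Union>F" using F(3) PB by auto
    ultimately obtain A where A: "A \<in> F" "x \<in> A" "y \<in> A"
      using tree_side[OF tr xy F(2)] by blast
    have "A \<in> Comp V H" "A \<subset> B" using F(1) A(1) by auto
    then show False using nosmall[of A] A by blast
  qed
  let ?G = "two_section V (Hbar H B)"
  have "component V ?G x \<noteq> component V ?G y"
  proof
    assume "component V ?G x = component V ?G y"
    then have r: "reach ?G x y" using comp_eq_iff[OF xyV] by blast
    have ecb: "\<forall>e\<in>Hbar H B. connected_on e T" using ec unfolding Hbar_def by blast
    obtain e where e: "e \<in> Hbar H B" "x \<in> e" "y \<in> e" using path_side[OF tr ecb xy r] by blast
    have eH: "e \<in> H" "\<not> B \<subseteq> e" using e(1) unfolding Hbar_def by auto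
    have "B \<inter> e \<noteq> {}" using PB e by blast
    then have "B \<inter> e \<in> Comp V H" using Comp_inter[OF hg _ edge_Comp[OF hg eH(1)]] PB by blast
    then have "?P (B \<inter> e)" using PB e by blast
    moreover have "B \<inter> e \<subset> B" using eH(2) by blast
    ultimately show False using nosmall by blast
  qed
  then have "{x,y} \<in> Delta V H B" using PB unfolding Delta_def by blast
  then show ?thesis using basic by blast
qed


abbreviation cc :: "'a set \<Rightarrow> 'a set set \<Rightarrow> 'a set \<Rightarrow> 'a \<Rightarrow> 'a set" where
  "cc V H B v \<equiv> component V (two_section V (Hbar H B)) v"

lemma comp_mem_eq:
  assumes "w \<in> V" "v \<in> cc V H B w"
  shows "cc V H B v = cc V H B w"
proof -
  have "v \<in> V" "reach (two_section V (Hbar H B)) w v" using assms(2) unfolding comp_simp by auto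
  then have "cc V H B w = cc V H B v" using comp_eq_iff[OF assms(1), of v "Hbar H B"] by simp
  then show ?thesis by simp
qed

lemma trace_reach:
  assumes trc: "\<forall>w\<in>B. connected_on (cc V H B w \<inter> B) T" and BV: "B \<subseteq> V"
    and u1: "u1 \<in> B" and v1: "v1 \<in> B" and uv: "cc V H B u1 \<noteq> cc V H B v1"
    and w: "w \<in> B" "w' \<in> B" "cc V H B w = cc V H B w'"
  shows "reach (T - {{u1,v1}}) w w'"
proof -
  let ?P = "cc V H B w \<inter> B"
  have "\<not> {u1,v1} \<subseteq> ?P"
  proof
    assume "{u1,v1} \<subseteq> ?P"
    then have "u1 \<in> cc V H B w" "v1 \<in> cc V H B w" by auto
    then have "cc V H B u1 = cc V H B w" "cc V H B v1 = cc V H B w"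
      using comp_mem_eq[of w V] w(1) BV by blast+
    then show False using uv by simp
  qed
  then have c: "connected_on ?P (T - {{u1,v1}})" using conn_remove trc w(1) by blast
  have "w \<in> ?P" "w' \<in> ?P" using w BV comp_self[of _ V] by auto
  then have "reach {f \<in> T - {{u1,v1}}. f \<subseteq> ?P} w w'" using c unfolding connected_on_def by blast
  then show ?thesis by (rule reach_mono[rotated]) (rule Collect_subset)
qed

lemma reach3:
  assumes "reach (T - {e}) a b" "{b,c} \<in> T" "{b,c} \<noteq> e" "reach (T - {e}) c d"
  shows "reach (T - {e}) a d"
proof -
  have "{b,c} \<in> T - {e}" using assms(2,3) by simp
  then have "reach (T - {e}) a c" by (rule reach_step[OF assms(1)])
  then show ?thesis by (rule reach_trans[OF _ assms(4)])
qed

lemma adm_fwd: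
  assumes tr: "is_tree V T" and hg: "\<forall>e\<in>H. e \<noteq> {} \<and> e \<subseteq> V"
    and ec: "\<forall>e\<in>H. connected_on e T" and BC: "B \<in> Comp V H" and Vne: "V \<noteq> {}"
  shows "admissible V H B (T \<inter> Delta V H B)"
proof -
  let ?c = "cc V H B"
  let ?E = "T \<inter> Delta V H B"
  let ?Ga = "Gamma_edge V H B ` ?E"
  let ?A = "A_comps V H B"
  have BV: "B \<subseteq> V" and Bne: "B \<noteq> {}" using Comp_sub[OF hg Vne BC] by auto
  have Bconn: "connected_on B T" by (rule Comp_conn[OF tr hg ec BC])
  have trc: "\<forall>w\<in>B. connected_on (?c w \<inter> B) T"
  proof
    fix w assume w: "w \<in> B"
    have hb1: "\<forall>e\<in>Hbar H B. e \<subseteq> V" using hg unfolding Hbar_def by blast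
    have hb2: "\<forall>e\<in>Hbar H B. connected_on e T" using ec unfolding Hbar_def by blast
    have wV: "w \<in> V" using w BV by blast
    have c1: "connected_on (?c w) T" by (rule comp_conn[OF tr hb1 hb2 wV])
    have s1: "?c w \<subseteq> V" unfolding comp_simp by blast
    have "w \<in> ?c w \<inter> B" using comp_self[OF wV] w by blast
    then show "connected_on (?c w \<inter> B) T" using tree_inter[OF tr s1 BV c1 Bconn] by blast
  qed
  have cut: False if e1: "{u1,v1} \<in> T" "u1 \<in> B" "v1 \<in> B" "?c u1 \<noteq> ?c v1"
     and r: "reach (T - {{u1,v1}}) u1 v1" for u1 v1
    using tree_cut[OF tr e1(1)] r by blast
  have inj: "inj_on (Gamma_edge V H B) ?E"
  proof (rule inj_onI, rule ccontr)
    fix e1 e2 assume e1: "e1 \<in> ?E" and e2: "e2 \<in> ?E" and eq: "Gamma_edge V H B e1 = Gamma_edge V H B e2"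
      and ne: "e1 \<noteq> e2"
    obtain u1 v1 where uv1: "e1 = {u1,v1}" "u1 \<in> B" "v1 \<in> B" "?c u1 \<noteq> ?c v1"
      using e1 Delta_elem by blast
    obtain u2 v2 where uv2: "e2 = {u2,v2}" "u2 \<in> B" "v2 \<in> B" "?c u2 \<noteq> ?c v2"
      using e2 Delta_elem by blast
    have "{?c u1, ?c v1} = {?c u2, ?c v2}" using eq by (simp add: uv1(1) uv2(1) Gamma_pair)
    then have cs: "(?c u2 = ?c u1 \<and> ?c v2 = ?c v1) \<or> (?c u2 = ?c v1 \<and> ?c v2 = ?c u1)"
      by (auto simp: doubleton_eq_iff)
    have tr1: "reach (T - {{u1,v1}}) w w'" if "w \<in> B" "w' \<in> B" "?c w = ?c w'" for w w'
      by (rule trace_reach[OF trc BV uv1(2,3,4) that])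
    have e2T: "{u2,v2} \<in> T" "{v2,u2} \<in> T" using e2(1) uv2(1) by (auto simp: insert_commute)
    have e2n: "{u2,v2} \<noteq> {u1,v1}" "{v2,u2} \<noteq> {u1,v1}" using ne uv1(1) uv2(1) by (auto simp: insert_commute)
    from cs have "reach (T - {{u1,v1}}) u1 v1"
    proof
      assume h: "?c u2 = ?c u1 \<and> ?c v2 = ?c v1"
      show ?thesis
        by (rule reach3[OF tr1[of u1 u2] e2T(1) e2n(1) tr1[of v2 v1]]) (use h uv1 uv2 in auto)
    next
      assume h: "?c u2 = ?c v1 \<and> ?c v2 = ?c u1"
      show ?thesis
        by (rule reach3[OF tr1[of u1 v2] e2T(2) e2n(2) tr1[of u2 v1]]) (use h uv1 uv2 in auto)
    qed
    then show False using cut uv1 e1 by blast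
  qed
  have inA: "?c u \<in> ?A" if "u \<in> B" for u
    using that unfolding A_comps_def by blast
  have sub: "?Ga \<subseteq> graph_edges_on ?A"
  proof
    fix g assume "g \<in> ?Ga"
    then obtain e where e: "e \<in> ?E" "g = Gamma_edge V H B e" by blast
    then obtain u v where uv: "e = {u,v}" "u \<in> B" "v \<in> B" "?c u \<noteq> ?c v"
      using Delta_elem by blast
    have "g = {?c u, ?c v}" using e(2) by (simp add: uv(1) Gamma_pair)
    then show "g \<in> graph_edges_on ?A" using inA uv unfolding graph_edges_on_def by blast
  qed
  have conn: "connected_on ?A ?Ga"
    unfolding connected_on_def
  proof (intro conjI ballI)
    show "?A \<noteq> {}" using Bne inA by blast
    fix X Y assume "X \<in> ?A" "Y \<in> ?A"
    then obtain u v where uv: "u \<in> B" "v \<in> B" "X = ?c u" "Y = ?c v" unfolding A_comps_def by blast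
    have gen: "reach {g \<in> ?Ga. g \<subseteq> ?A} (?c u) (?c z)" if "reach {e \<in> T. e \<subseteq> B} u z" for z
      using that
    proof (induction rule: reach_induct)
      case base then show ?case by simp
    next
      case (step y z)
      show ?case
      proof (cases "?c y = ?c z")
        case True then show ?thesis using step(3) by simp
      next
        case False
        have yz: "y \<in> B" "z \<in> B" "{y,z} \<in> T" using step(2) by auto
        then have "{y,z} \<in> ?E" using False unfolding Delta_def by blast
        then have "Gamma_edge V H B {y,z} \<in> ?Ga" by blast
        then have "{?c y, ?c z} \<in> ?Ga" by (simp only: Gamma_pair)
        moreover have "{?c y, ?c z} \<subseteq> ?A" using inA yz by blast
        ultimately have "{?c y, ?c z} \<in> {g \<in> ?Ga. g \<subseteq> ?A}" by blast
        then show ?thesis by (rule reach_step[OF step(3)])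
      qed
    qed
    have "reach {e \<in> T. e \<subseteq> B} u v" using Bconn uv unfolding connected_on_def by blast
    then show "reach {g \<in> ?Ga. g \<subseteq> ?A} X Y" using gen uv by blast
  qed
  have minim: "\<not> connected_on ?A (?Ga - {g})" if gG: "g \<in> ?Ga" for g
  proof
    assume cg: "connected_on ?A (?Ga - {g})"
    obtain e1 where e1: "e1 \<in> ?E" "g = Gamma_edge V H B e1" using gG by blast
    then obtain u1 v1 where uv1: "e1 = {u1,v1}" "u1 \<in> B" "v1 \<in> B" "?c u1 \<noteq> ?c v1"
      using Delta_elem by blast
    have tr1: "reach (T - {{u1,v1}}) w w'" if "w \<in> B" "w' \<in> B" "?c w = ?c w'" for w w'
      by (rule trace_reach[OF trc BV uv1(2,3,4) that])
    have "?c u1 \<in> ?A" "?c v1 \<in> ?A" using inA uv1(2,3) by auto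
    then have "reach {g' \<in> ?Ga - {g}. g' \<subseteq> ?A} (?c u1) (?c v1)"
      using cg unfolding connected_on_def by blast
    then have r: "reach (?Ga - {g}) (?c u1) (?c v1)" by (rule reach_mono[rotated]) (rule Collect_subset)
    have gen: "\<forall>w\<in>B. ?c w = Z \<longrightarrow> reach (T - {{u1,v1}}) u1 w"
      if "reach (?Ga - {g}) (?c u1) Z" for Z
      using that
    proof (induction rule: reach_induct)
      case base
      show ?case
      proof (intro ballI impI)
        fix w assume "w \<in> B" "?c w = ?c u1"
        then show "reach (T - {{u1,v1}}) u1 w" using tr1[of u1 w] uv1(2) by simp
      qed
    next
      case (step Y Z)
      have yz: "{Y,Z} \<in> ?Ga" "{Y,Z} \<noteq> g" using step(2) by auto
      then obtain e2 where e2: "e2 \<in> ?E" "{Y,Z} = Gamma_edge V H B e2" by blast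
      obtain a b where ab: "e2 = {a,b}" "a \<in> B" "b \<in> B" "?c a \<noteq> ?c b"
        using e2(1) Delta_elem by blast
      have "{Y,Z} = {?c a, ?c b}" using e2(2) by (simp add: ab(1) Gamma_pair)
      then have cs: "(?c a = Y \<and> ?c b = Z) \<or> (?c a = Z \<and> ?c b = Y)" by (auto simp: doubleton_eq_iff)
      have ne: "e2 \<noteq> e1" using e2(2) e1(2) yz(2) by auto
      have e2T: "{a,b} \<in> T" "{b,a} \<in> T" using e2(1) ab(1) by (auto simp: insert_commute)
      have e2n: "{a,b} \<noteq> {u1,v1}" "{b,a} \<noteq> {u1,v1}" using ne uv1(1) ab(1) by (auto simp: insert_commute)
      show ?case
      proof (intro ballI impI)
        fix w assume w: "w \<in> B" "?c w = Z"
        from cs show "reach (T - {{u1,v1}}) u1 w"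
        proof
          assume h: "?c a = Y \<and> ?c b = Z"
          have "reach (T - {{u1,v1}}) u1 a" using step(3) ab(2) h by simp
          then show ?thesis by (rule reach3[OF _ e2T(1) e2n(1) tr1[of b w]]) (use h w ab in auto)
        next
          assume h: "?c a = Z \<and> ?c b = Y"
          have "reach (T - {{u1,v1}}) u1 b" using step(3) ab(3) h by simp
          then show ?thesis by (rule reach3[OF _ e2T(2) e2n(2) tr1[of a w]]) (use h w ab in auto)
        qed
      qed
    qed
    have "reach (T - {{u1,v1}}) u1 v1" using gen[OF r] uv1(3) by simp
    moreover have "{u1,v1} \<in> T" using e1(1) uv1(1) by simp
    ultimately show False using cut[of u1 v1] uv1(2,3,4) by blast
  qed
  have "is_tree ?A ?Ga" unfolding is_tree_def using sub conn minim by blast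
  then show ?thesis unfolding admissible_def using inj by blast
qed



lemma not_one_comp:
  assumes tr0: "is_tree V T0" and hg: "\<forall>e\<in>H. e \<noteq> {} \<and> e \<subseteq> V"
    and ec0: "\<forall>e\<in>H. connected_on e T0" and basic: "basic_set V H B" and Vne: "V \<noteq> {}"
    and w: "w \<in> B"
  shows "\<not> B \<subseteq> cc V H B w"
proof
  assume Bin: "B \<subseteq> cc V H B w"
  let ?G = "two_section V (Hbar H B)"
  have BC: "B \<in> Comp V H" and cardB: "card B > 1" using basic unfolding basic_set_def by auto
  have BV: "B \<subseteq> V" and Bne: "B \<noteq> {}" using Comp_sub[OF hg Vne BC] by auto
  have finB: "finite B" using cardB card.infinite by fastforce
  have allr: "reach ?G x y" if "x \<in> B" "y \<in> B" for x y
  proof -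
    have "reach ?G w x" "reach ?G w y" using Bin that unfolding comp_simp by auto
    then show ?thesis using reach_trans[OF reach_sym] by fast
  qed
  define F' where "F' = {e \<inter> B | e. e \<in> Hbar H B \<and> e \<inter> B \<noteq> {}}"
  define R where "R = {(X, Y). X \<in> F' \<and> Y \<in> F' \<and> X \<inter> Y \<noteq> {}}"
  have ecb: "\<forall>e\<in>Hbar H B. connected_on e T0" using ec0 unfolding Hbar_def by blast
  have Fsub: "F' \<subseteq> {C \<in> Comp V H. C \<subset> B}"
  proof
    fix X assume "X \<in> F'"
    then obtain e where e: "X = e \<inter> B" "e \<in> Hbar H B" "e \<inter> B \<noteq> {}" unfolding F'_def by blast
    have eH: "e \<in> H" "\<not> B \<subseteq> e" using e(2) unfolding Hbar_def by auto
    have "B \<inter> e \<in> Comp V H" using Comp_inter[OF hg BC edge_Comp[OF hg eH(1)]] e(3) by (simp add: Int_commute)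
    then have "X \<in> Comp V H" using e(1) by (simp add: Int_commute)
    moreover have "X \<subset> B" using e(1) eH(2) by blast
    ultimately show "X \<in> {C \<in> Comp V H. C \<subset> B}" by blast
  qed
  have cover: "\<exists>X\<in>F'. b \<in> X" if b: "b \<in> B" for b
  proof -
    have "\<not> B \<subseteq> {b}"
    proof
      assume "B \<subseteq> {b}"
      then have "card B \<le> card {b}" by (intro card_mono) auto
      then show False using cardB by simp
    qed
    then obtain b' where b': "b' \<in> B" "b' \<noteq> b" by blast
    have "reach ?G b' b" by (rule allr[OF b'(1) b])
    then obtain y where "{y,b} \<in> ?G" using reach_last[OF _ b'(2)] by blast
    then obtain e where e: "e \<in> Hbar H B" "b \<in> e" using ts_edge[of y b] by blast
    then have "e \<inter> B \<in> F'" using b unfolding F'_def by blast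
    then show ?thesis using e b by blast
  qed
  have claim1: "(X, Y) \<in> R\<^sup>*" if h: "x \<in> B" "y \<in> B" "{x,y} \<in> T0" "X \<in> F'" "Y \<in> F'" "x \<in> X" "y \<in> Y" for x y X Y
  proof -
    obtain e where e: "e \<in> Hbar H B" "x \<in> e" "y \<in> e"
      using path_side[OF tr0 ecb h(3) allr[OF h(1,2)]] by blast
    have Z: "e \<inter> B \<in> F'" using e h(1) unfolding F'_def by blast
    have "(X, e \<inter> B) \<in> R" using Z h e unfolding R_def by blast
    moreover have "(e \<inter> B, Y) \<in> R" using Z h e unfolding R_def by blast
    ultimately show ?thesis by (rule converse_rtrancl_into_rtrancl[OF _ r_into_rtrancl])
  qed
  have claim2: "\<forall>Y\<in>F'. z \<in> Y \<longrightarrow> (X, Y) \<in> R\<^sup>*"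
    if "X \<in> F'" "x \<in> X" "reach {e \<in> T0. e \<subseteq> B} x z" for X x z
    using that(3)
  proof (induction rule: reach_induct)
    case base
    show ?case
    proof (intro ballI impI)
      fix Y assume "Y \<in> F'" "x \<in> Y"
      then have "(X, Y) \<in> R" using that(1,2) unfolding R_def by blast
      then show "(X, Y) \<in> R\<^sup>*" by (rule r_into_rtrancl)
    qed
  next
    case (step y z)
    have yz: "y \<in> B" "z \<in> B" "{y,z} \<in> T0" using step(2) by auto
    obtain Z where Z: "Z \<in> F'" "y \<in> Z" using cover[OF yz(1)] by blast
    have XZ: "(X, Z) \<in> R\<^sup>*" using step(3) Z by blast
    show ?case
    proof (intro ballI impI)
      fix Y assume "Y \<in> F'" "z \<in> Y"
      then have "(Z, Y) \<in> R\<^sup>*" using claim1[OF yz Z(1) _ Z(2)] by blast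
      then show "(X, Y) \<in> R\<^sup>*" using XZ by (rule rtrancl_trans[rotated])
    qed
  qed
  have B0: "connected_on B T0" by (rule Comp_conn[OF tr0 hg ec0 BC])
  have FB: "\<forall>X\<in>F'. X \<subseteq> B" unfolding F'_def by blast
  have Fne: "\<forall>X\<in>F'. X \<noteq> {}" unfolding F'_def by blast
  have cf: "connected_family F'"
    unfolding connected_family_def
  proof (intro conjI ballI)
    obtain b where "b \<in> B" using Bne by blast
    then show "F' \<noteq> {}" using cover by blast
    fix X Y assume XY: "X \<in> F'" "Y \<in> F'"
    obtain x where x: "x \<in> X" using Fne XY(1) by blast
    obtain y where y: "y \<in> Y" using Fne XY(2) by blast
    have "x \<in> B" "y \<in> B" using x y FB XY by blast+
    then have "reach {e \<in> T0. e \<subseteq> B} x y" using B0 unfolding connected_on_def by blast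
    then have "(X, Y) \<in> R\<^sup>*" using claim2[OF XY(1) x] XY(2) y by blast
    then show "(X, Y) \<in> {(X, Y). X \<in> F' \<and> Y \<in> F' \<and> X \<inter> Y \<noteq> {}}\<^sup>*" unfolding R_def .
  qed
  have "\<Union>F' = B" using FB cover by blast
  then show False using basic Fsub cf unfolding basic_set_def by blast
qed

lemma comp_gen:
  assumes hg: "\<forall>e\<in>H. e \<noteq> {} \<and> e \<subseteq> V" and u: "u \<in> V" and ne: "cc V H B u \<noteq> {u}"
  shows "cc V H B u \<in> gen_sets H"
proof -
  let ?K = "Hbar H B"
  let ?G = "two_section V ?K"
  let ?C = "cc V H B u"
  define F where "F = {e \<in> ?K. e \<subseteq> ?C}"
  define R where "R = {(X, Y). X \<in> F \<and> Y \<in> F \<and> X \<inter> Y \<noteq> {}}"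
  have Kp: "e \<in> H" "e \<subseteq> V" "e \<noteq> {}" if "e \<in> ?K" for e
    using that hg unfolding Hbar_def by auto
  have uC: "u \<in> ?C" by (rule comp_self[OF u])
  have rC: "reach ?G x y" if "x \<in> ?C" "y \<in> ?C" for x y
  proof -
    have "reach ?G u x" "reach ?G u y" using that unfolding comp_simp by auto
    then show ?thesis using reach_trans[OF reach_sym] by fast
  qed
  have cover: "\<exists>e\<in>F. x \<in> e" if x: "x \<in> ?C" for x
  proof -
    obtain x' where x': "x' \<in> ?C" "x' \<noteq> x"
    proof (cases "x = u")
      case True
      then obtain x' where "x' \<in> ?C" "x' \<noteq> x" using ne uC by blast
      then show ?thesis using that by blast
    next
      case False then show ?thesis using that uC by blast
    qed
    have "reach ?G x' x" by (rule rC[OF x'(1) x])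
    then obtain y where "{y,x} \<in> ?G" using reach_last[OF _ x'(2)] by blast
    then obtain e where e: "e \<in> ?K" "x \<in> e" using ts_edge[of y x] by blast
    have "e \<subseteq> ?C" using edge_in_comp[OF e(1) Kp(2)[OF e(1)] e(2) x] .
    then show ?thesis using e unfolding F_def by blast
  qed
  have UF: "\<Union>F = ?C" using cover unfolding F_def by blast
  have gF: "\<forall>A\<in>F. A \<in> gen_sets H" using Kp unfolding F_def by (blast intro: gen_sets.edge)
  have claim: "\<forall>e\<in>F. z \<in> e \<longrightarrow> (e1, e) \<in> R\<^sup>*"
    if e1: "e1 \<in> F" "a \<in> e1" and r: "reach ?G a z" for e1 a z
    using r
  proof (induction rule: reach_induct)
    case base
    show ?case
    proof (intro ballI impI)
      fix e assume "e \<in> F" "a \<in> e"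
      then have "(e1, e) \<in> R" using e1 unfolding R_def by blast
      then show "(e1, e) \<in> R\<^sup>*" by (rule r_into_rtrancl)
    qed
  next
    case (step y z)
    obtain e' where e': "e' \<in> ?K" "y \<in> e'" "z \<in> e'" using ts_edge[OF step(2)] by blast
    have "a \<in> ?C" using e1 unfolding F_def by blast
    then have "reach ?G u a" unfolding comp_simp by simp
    then have "reach ?G u y" using step(1) by (rule reach_trans)
    moreover have "y \<in> V" using e'(1,2) Kp by blast
    ultimately have "y \<in> ?C" unfolding comp_simp by simp
    then have "e' \<subseteq> ?C" using edge_in_comp[OF e'(1) Kp(2)[OF e'(1)] e'(2)] by blast
    then have e'F: "e' \<in> F" using e'(1) unfolding F_def by blast
    then have ee: "(e1, e') \<in> R\<^sup>*" using step(3) e'(2) by blast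
    show ?case
    proof (intro ballI impI)
      fix e assume "e \<in> F" "z \<in> e"
      then have "(e', e) \<in> R" using e'F e'(3) unfolding R_def by blast
      then show "(e1, e) \<in> R\<^sup>*" using ee by (rule rtrancl_into_rtrancl[rotated])
    qed
  qed
  have cf: "connected_family F"
    unfolding connected_family_def
  proof (intro conjI ballI)
    show "F \<noteq> {}" using cover uC by blast
    fix X Y assume XY: "X \<in> F" "Y \<in> F"
    obtain a where a: "a \<in> X" using XY(1) Kp(3) unfolding F_def by blast
    obtain b where b: "b \<in> Y" using XY(2) Kp(3) unfolding F_def by blast
    have "a \<in> ?C" "b \<in> ?C" using a b XY unfolding F_def by blast+
    then have "reach ?G a b" by (rule rC)
    then have "(X, Y) \<in> R\<^sup>*" using claim[OF XY(1) a] XY(2) b by blast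
    then show "(X, Y) \<in> {(X, Y). X \<in> F \<and> Y \<in> F \<and> X \<inter> Y \<noteq> {}}\<^sup>*" unfolding R_def .
  qed
  have "\<Union>F \<in> gen_sets H" by (rule gen_sets.union[OF gF cf])
  then show ?thesis using UF by simp
qed

lemma trace_Comp:
  assumes hg: "\<forall>e\<in>H. e \<noteq> {} \<and> e \<subseteq> V" and Vne: "V \<noteq> {}" and BC: "B \<in> Comp V H"
    and u: "u \<in> B" and nb: "\<not> B \<subseteq> cc V H B u"
  shows "cc V H B u \<inter> B \<in> Comp V H \<and> cc V H B u \<inter> B \<subset> B"
proof
  have BV: "B \<subseteq> V" using Comp_sub[OF hg Vne BC] by blast
  have uV: "u \<in> V" using u BV by blast
  have uC: "u \<in> cc V H B u" by (rule comp_self[OF uV])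
  show "cc V H B u \<inter> B \<subset> B" using nb by blast
  show "cc V H B u \<inter> B \<in> Comp V H"
  proof (cases "cc V H B u = {u}")
    case True
    then have "cc V H B u \<inter> B = {u}" using u by blast
    then show ?thesis using uV unfolding Comp_def by blast
  next
    case False
    have g: "cc V H B u \<in> gen_sets H" by (rule comp_gen[OF hg uV False])
    have "cc V H B u \<noteq> V" using nb BV by blast
    then have "cc V H B u \<in> Comp V H" by (rule gen_Comp[OF hg g])
    moreover have "cc V H B u \<inter> B \<noteq> {}" using uC u by blast
    ultimately show ?thesis using Comp_inter[OF hg _ BC] by blast
  qed
qed



lemma trace_reachB:
  assumes trc: "\<forall>w\<in>B. connected_on (cc V H B w \<inter> B) T" and BV: "B \<subseteq> V"
    and w: "w \<in> B" "w' \<in> B" "cc V H B w = cc V H B w'"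
  shows "reach {e \<in> T. e \<subseteq> B} w w'"
proof -
  have "w \<in> cc V H B w \<inter> B" "w' \<in> cc V H B w \<inter> B" using w BV comp_self[of _ V] by auto
  then have "reach {e \<in> T. e \<subseteq> cc V H B w \<inter> B} w w'" using trc w(1) unfolding connected_on_def by blast
  then show ?thesis by (rule reach_mono[rotated]) blast
qed

lemma bwd:
  assumes tr: "is_tree V T" and hg: "\<forall>e\<in>H. e \<noteq> {} \<and> e \<subseteq> V" and Vne: "V \<noteq> {}" and fin: "finite V"
    and tr0: "is_tree V T0" and ec0: "\<forall>e\<in>H. connected_on e T0"
    and adm: "\<forall>B. basic_set V H B \<longrightarrow> admissible V H B (E B)"
    and TE: "T = (\<Union>B \<in> {B. basic_set V H B}. E B)"
  shows "\<forall>e\<in>H. connected_on e T"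
proof -
  have main: "connected_on C T" if "C \<in> Comp V H" for C
    using that
  proof (induction "card C" arbitrary: C rule: less_induct)
    case less
    have CV: "C \<subseteq> V" and Cne: "C \<noteq> {}" using Comp_sub[OF hg Vne less.prems] by auto
    show ?case
    proof (cases "card C > 1")
      case False
      have True: "finite C" using finite_subset[OF CV fin] .
      then have "\<forall>a\<in>C. \<forall>b\<in>C. a = b" using False card_le_Suc0_iff_eq[OF True] by simp
      then obtain v where "C = {v}" using Cne by blast
      then show ?thesis using conn_single by simp
    next
      case card1: True
      have finC: "finite C" using card1 card.infinite by fastforce
      show ?thesis
      proof (cases "basic_set V H C")
        case False
        then obtain F where F: "F \<subseteq> {C' \<in> Comp V H. C' \<subset> C}" "connected_family F" "\<Union>F = C"
          using less.prems card1 unfolding basic_set_def by blast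
        have "\<forall>A\<in>F. connected_on A T"
        proof
          fix A assume "A \<in> F"
          then have A: "A \<in> Comp V H" "A \<subset> C" using F(1) by auto
          have "card A < card C" by (rule psubset_card_mono[OF finC A(2)])
          then show "connected_on A T" using less.hyps A(1) by blast
        qed
        then have "connected_on (\<Union>F) T" by (rule conn_union[OF F(2)])
        then show ?thesis using F(3) by simp
      next
        case basic: True
        let ?B = C
        let ?c = "cc V H C"
        let ?Ga = "Gamma_edge V H C ` E C"
        let ?A = "A_comps V H C"
        have ad: "admissible V H C (E C)" using adm basic by blast
        then have ED: "E C \<subseteq> Delta V H C" and itr: "is_tree ?A ?Ga" unfolding admissible_def by auto
        have ET: "E C \<subseteq> T" using TE basic by blast
        have trc: "\<forall>w\<in>C. connected_on (?c w \<inter> C) T"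
        proof
          fix w assume w: "w \<in> C"
          have nb: "\<not> C \<subseteq> ?c w" by (rule not_one_comp[OF tr0 hg ec0 basic Vne w])
          have tc: "?c w \<inter> C \<in> Comp V H \<and> ?c w \<inter> C \<subset> C"
            by (rule trace_Comp[OF hg Vne less.prems w nb])
          then have "card (?c w \<inter> C) < card C" using psubset_card_mono[OF finC] by blast
          then show "connected_on (?c w \<inter> C) T" using less.hyps tc by blast
        qed
        have inA: "?c u \<in> ?A" if "u \<in> C" for u
          using that unfolding A_comps_def by blast
        have rB: "reach {e \<in> T. e \<subseteq> C} u v" if uv: "u \<in> C" "v \<in> C" for u v
        proof -
          have "connected_on ?A ?Ga" using itr unfolding is_tree_def by blast
          then have "reach {g \<in> ?Ga. g \<subseteq> ?A} (?c u) (?c v)"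
            using inA[OF uv(1)] inA[OF uv(2)] unfolding connected_on_def by blast
          then have r: "reach ?Ga (?c u) (?c v)" by (rule reach_mono[rotated]) (rule Collect_subset)
          have gen: "\<forall>w\<in>C. ?c w = Z \<longrightarrow> reach {e \<in> T. e \<subseteq> C} u w"
            if "reach ?Ga (?c u) Z" for Z
            using that
          proof (induction rule: reach_induct)
            case base
            show ?case
            proof (intro ballI impI)
              fix w assume "w \<in> C" "?c w = ?c u"
              then show "reach {e \<in> T. e \<subseteq> C} u w"
                using trace_reachB[OF trc CV uv(1), of w] by simp
            qed
          next
            case (step Y Z)
            obtain e2 where e2: "e2 \<in> E C" "{Y,Z} = Gamma_edge V H C e2" using step(2) by blast
            have e2D: "e2 \<in> Delta V H C" using e2(1) ED by blast
            obtain a b where ab: "e2 = {a,b}" "a \<in> C" "b \<in> C" "?c a \<noteq> ?c b"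
              using e2D Delta_elem by blast
            have "{Y,Z} = {?c a, ?c b}" using e2(2) by (simp add: ab(1) Gamma_pair)
            then have cs: "(?c a = Y \<and> ?c b = Z) \<or> (?c a = Z \<and> ?c b = Y)" by (auto simp: doubleton_eq_iff)
            have e2T: "{a,b} \<in> {e \<in> T. e \<subseteq> C}" "{b,a} \<in> {e \<in> T. e \<subseteq> C}"
              using ET e2(1) ab(1,2,3) by (auto simp: insert_commute)
            show ?case
            proof (intro ballI impI)
              fix w assume w: "w \<in> C" "?c w = Z"
              from cs show "reach {e \<in> T. e \<subseteq> C} u w"
              proof
                assume h: "?c a = Y \<and> ?c b = Z"
                have "reach {e \<in> T. e \<subseteq> C} u a" using step(3) ab(2) h by simp
                then have "reach {e \<in> T. e \<subseteq> C} u b" using e2T(1) by (rule reach_step)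
                moreover have "reach {e \<in> T. e \<subseteq> C} b w"
                  using trace_reachB[OF trc CV ab(3) w(1)] h w by simp
                ultimately show ?thesis by (rule reach_trans)
              next
                assume h: "?c a = Z \<and> ?c b = Y"
                have "reach {e \<in> T. e \<subseteq> C} u b" using step(3) ab(3) h by simp
                then have "reach {e \<in> T. e \<subseteq> C} u a" using e2T(2) by (rule reach_step)
                moreover have "reach {e \<in> T. e \<subseteq> C} a w"
                  using trace_reachB[OF trc CV ab(2) w(1)] h w by simp
                ultimately show ?thesis by (rule reach_trans)
              qed
            qed
          qed
          show ?thesis using gen[OF r] uv(2) by simp
        qed
        show ?thesis unfolding connected_on_def using Cne rB by blast
      qed
    qed
  qed
  show ?thesis using main edge_Comp[OF hg] by blast
qed

theorem mainTheorem16: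
  fixes V :: "'a set" and H :: "'a set set" and T :: "'a set set"
  assumes "hypertree V H"
    and "is_tree V T"
  shows "host_tree V H T \<longleftrightarrow>
    (\<exists>E :: 'a set \<Rightarrow> 'a set set.
        (\<forall>B. basic_set V H B \<longrightarrow> admissible V H B (E B)) \<and>
        T = (\<Union>B \<in> {B. basic_set V H B}. E B))"
proof -
  have fin: "finite V" and hg: "\<forall>e\<in>H. e \<noteq> {} \<and> e \<subseteq> V"
    using assms(1) unfolding hypertree_def hypergraph_def by auto
  obtain T0 where h0: "host_tree V H T0" using assms(1) unfolding hypertree_def by blast
  have tr0: "is_tree V T0" and ec0: "\<forall>e\<in>H. connected_on e T0" using h0 unfolding host_tree_def by auto
  have tr: "is_tree V T" by fact
  have Vne: "V \<noteq> {}" using tr unfolding is_tree_def connected_on_def by blast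
  show ?thesis
  proof
    assume "host_tree V H T"
    then have ec: "\<forall>e\<in>H. connected_on e T" unfolding host_tree_def by blast
    let ?E = "\<lambda>B. T \<inter> Delta V H B"
    have adm: "\<forall>B. basic_set V H B \<longrightarrow> admissible V H B (?E B)"
    proof (intro allI impI)
      fix B assume "basic_set V H B"
      then have "B \<in> Comp V H" unfolding basic_set_def by blast
      then show "admissible V H B (?E B)" by (rule adm_fwd[OF tr hg ec _ Vne])
    qed
    have "T \<subseteq> (\<Union>B \<in> {B. basic_set V H B}. ?E B)"
    proof
      fix e assume e: "e \<in> T"
      then have "e \<in> graph_edges_on V" using tr unfolding is_tree_def by blast
      then obtain x y where xy: "e = {x,y}" unfolding graph_edges_on_def by blast
      then obtain B where "basic_set V H B" "{x,y} \<in> Delta V H B"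
        using basic_min[OF tr hg fin ec] e by blast
      then show "e \<in> (\<Union>B \<in> {B. basic_set V H B}. ?E B)" using e xy by blast
    qed
    then have TE: "T = (\<Union>B \<in> {B. basic_set V H B}. ?E B)" by blast
    show "\<exists>E :: 'a set \<Rightarrow> 'a set set.
        (\<forall>B. basic_set V H B \<longrightarrow> admissible V H B (E B)) \<and>
        T = (\<Union>B \<in> {B. basic_set V H B}. E B)"
      by (rule exI[where x = ?E]) (use adm TE in blast)
  next
    assume "\<exists>E :: 'a set \<Rightarrow> 'a set set.
        (\<forall>B. basic_set V H B \<longrightarrow> admissible V H B (E B)) \<and>
        T = (\<Union>B \<in> {B. basic_set V H B}. E B)"
    then obtain E :: "'a set \<Rightarrow> 'a set set" where
      adm: "\<forall>B. basic_set V H B \<longrightarrow> admissible V H B (E B)" and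
      TE: "T = (\<Union>B \<in> {B. basic_set V H B}. E B)" by blast
    have "\<forall>e\<in>H. connected_on e T" by (rule bwd[OF tr hg Vne fin tr0 ec0 adm TE])
    then show "host_tree V H T" unfolding host_tree_def using tr by blast
  qed
qed


end
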